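(* Let $G$ be a connected Lie group whose Lie algebra $\mathfrak{g}$ is a subalgebra of $\mathfrak{gl}(q,\mathbb{C})$, and let $\|\cdot\|$ be a Banach algebra norm on $\mathfrak{gl}(q,\mathbb{C})$. Let $g(z)=\frac{z}{1-e^{-z}}$ and let $B_1,B_2$ be constants with $|g(z)|\leq B_1$, $|g'(z)|\leq B_2$ on $\{z\in\mathbb{C}:|z|\leq\pi\}$. Let $\|\mathrm{ad}\|=\sup\{\|\mathrm{ad}(A_1)A_2\|:\|A_1\|=\|A_2\|=1\}$. For a continuous curve $A:[0,T]\to\mathfrak{g}$ let $a$ solve $\dot a(t)=A(t)\cdot a(t)$, $a(0)=1$, and let $Q(t)=\exp^{-1}a(t)$ denote the continuous curve in $\mathfrak{g}$ with $Q(0)=0$ and $\exp Q(t)=a(t)$, assumed well defined. Then there exists $\varepsilon>0$ such that for every such $A$ and $t$ with $t\|A\|_{L^\infty[0,t]}<\varepsilon$, $$\Big\|Q(t)-\int_0^tA(s)\,ds\Big\|\leq\frac{\|\mathrm{ad}\|\,t^2B_2^2}{1-\|\mathrm{ad}\|B_2\varepsilon}\|A\|^2_{L^\infty[0,t]}.$$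
   Context: $\|A\|_{L^\infty[0,t]}=\sup_{s\in[0,t]}\|A(s)\|$. Where defined, $Q$ satisfies $\dot Q(t)=g(\mathrm{ad}\,Q(t))A(t)$, $Q(0)=0$. *)

theory Defs
  imports "HOL-Analysis.Analysis"
begin

type_synonym 'q cmat = "complex^'q^'q"

definition cscale :: "complex \<Rightarrow> 'q::finite cmat \<Rightarrow> 'q cmat" where
  "cscale c M = (\<chi> i j. c * M $ i $ j)"

fun mpow :: "'q::finite cmat \<Rightarrow> nat \<Rightarrow> 'q cmat" where
  "mpow M 0 = mat 1"
| "mpow M (Suc n) = M ** mpow M n"

definition mexp :: "'q::finite cmat \<Rightarrow> 'q cmat" where
  "mexp M = (\<Sum>n. (1 / fact n) *\<^sub>R mpow M n)"

definition mbracket :: "'q::finite cmat \<Rightarrow> 'q cmat \<Rightarrow> 'q cmat" where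
  "mbracket X Y = X ** Y - Y ** X"

definition lie_subalgebra :: "'q::finite cmat set \<Rightarrow> bool" where
  "lie_subalgebra L \<longleftrightarrow> subspace L \<and> (\<forall>X\<in>L. \<forall>Y\<in>L. mbracket X Y \<in> L)"

text \<open>A Banach algebra norm on gl(q,C) (completeness is automatic in finite dimension).\<close>
definition banach_algebra_norm :: "('q::finite cmat \<Rightarrow> real) \<Rightarrow> bool" where
  "banach_algebra_norm N \<longleftrightarrow>
     (\<forall>X. 0 \<le> N X) \<and> (\<forall>X. N X = 0 \<longleftrightarrow> X = 0) \<and>
     (\<forall>c X. N (cscale c X) = cmod c * N X) \<and>
     (\<forall>X Y. N (X + Y) \<le> N X + N Y) \<and>
     (\<forall>X Y. N (X ** Y) \<le> N X * N Y)"

text \<open>The function g(z) = z/(1 - e^{-z}), extended by its limit 1 at z = 0.\<close>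
definition gfun :: "complex \<Rightarrow> complex" where
  "gfun z = (if z = 0 then 1 else z / (1 - exp (- z)))"

definition ad_norm :: "('q::finite cmat \<Rightarrow> real) \<Rightarrow> real" where
  "ad_norm N = Sup {N (mbracket X Y) | X Y. N X = 1 \<and> N Y = 1}"

definition Linf :: "('q::finite cmat \<Rightarrow> real) \<Rightarrow> (real \<Rightarrow> 'q cmat) \<Rightarrow> real \<Rightarrow> real" where
  "Linf N A t = (SUP s\<in>{0..t}. N (A s))"

end

theory Submission
  imports Defs
begin


lemma matrix_add_rdistrib': "((A::'q::finite cmat) + B) ** C = A ** C + B ** C"
  by (vector matrix_matrix_mult_def sum.distrib[symmetric] field_simps)

lemma matrix_diff_rdistrib': "((A::'q::finite cmat) - B) ** C = A ** C - B ** C"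
  by (vector matrix_matrix_mult_def sum_subtractf[symmetric] field_simps)

lemma matrix_diff_ldistrib': "(C::'q::finite cmat) ** (A - B) = C ** A - C ** B"
  by (vector matrix_matrix_mult_def sum_subtractf[symmetric] field_simps)

lemma matrix_scaleR_l: "(c *\<^sub>R (A::'q::finite cmat)) ** B = c *\<^sub>R (A ** B)"
  by (simp add: scalar_matrix_assoc)

lemma matrix_scaleR_r: "(A::'q::finite cmat) ** (c *\<^sub>R B) = c *\<^sub>R (A ** B)"
  by (simp add: matrix_scalar_ac scalar_matrix_assoc)

lemma mm_bilinear: "bilinear (\<lambda>(A::'q::finite cmat) B. A ** B)"
  unfolding bilinear_def
  by (auto intro!: linearI simp: matrix_add_ldistrib matrix_add_rdistrib' matrix_scaleR_l matrix_scaleR_r)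

lemma mm_bounded_bilinear: "bounded_bilinear (\<lambda>(A::'q::finite cmat) B. A ** B)"
  using mm_bilinear bilinear_conv_bounded_bilinear by blast

lemma scaleR_cscale: "c *\<^sub>R (X::'q::finite cmat) = cscale (complex_of_real c) X"
  by (simp add: cscale_def vec_eq_iff) (simp add: scaleR_conv_of_real)


lemma mat1_nz: "(mat 1 :: 'q::finite cmat) \<noteq> 0"
proof
  assume "(mat 1 :: 'q::finite cmat) = 0"
  then have "(mat 1 :: 'q::finite cmat) $ undefined $ undefined = 0" by simp
  then show False by (simp add: mat_def)
qed

lemma exp_sums_real: "(\<lambda>n. x^n / fact n) sums exp (x::real)"
  using exp_converges[of x] by (simp add: divide_inverse_commute)

locale bn = fixes N :: "'q::finite cmat \<Rightarrow> real" assumes BN: "banach_algebra_norm N"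
begin

lemma N_nonneg: "0 \<le> N X" using BN by (simp add: banach_algebra_norm_def)
lemma N_eq0: "N X = 0 \<longleftrightarrow> X = 0" using BN by (simp add: banach_algebra_norm_def)
lemma N_zero[simp]: "N 0 = 0" using N_eq0 by simp
lemma N_tri: "N (X + Y) \<le> N X + N Y" using BN by (simp add: banach_algebra_norm_def)
lemma N_mult: "N (X ** Y) \<le> N X * N Y" using BN by (simp add: banach_algebra_norm_def)
lemma N_scaleR: "N (c *\<^sub>R X) = \<bar>c\<bar> * N X"
  using BN by (simp add: banach_algebra_norm_def scaleR_cscale)
lemma N_minus: "N (- X) = N X"
  using N_scaleR[of "-1" X] by simp
lemma N_diff_comm: "N (X - Y) = N (Y - X)"
  using N_minus[of "X - Y"] by simp
lemma N_diff_tri: "N (X - Y) \<le> N X + N Y"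
  using N_tri[of X "-Y"] N_minus[of Y] by simp
lemma N_rev_tri: "N X - N Y \<le> N (X - Y)"
  using N_tri[of "X - Y" Y] by simp

lemma N_sum: "N (sum f S) \<le> (\<Sum>i\<in>S. N (f i))"
proof (induction S rule: infinite_finite_induct)
  case (insert x F) then show ?case using N_tri[of "f x" "sum f F"] by (simp add: sum.insert)
qed auto

lemma N_convex: "convex_on UNIV N"
proof (rule convex_onI)
  fix t :: real and x y assume t: "0 < t" "t < 1"
  have "N ((1 - t) *\<^sub>R x + t *\<^sub>R y) \<le> N ((1 - t) *\<^sub>R x) + N (t *\<^sub>R y)" by (rule N_tri)
  also have "\<dots> = (1 - t) * N x + t * N y" using t by (simp add: N_scaleR)
  finally show "N ((1 - t) *\<^sub>R x + t *\<^sub>R y) \<le> (1 - t) * N x + t * N y" .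
qed auto

lemma N_cont: "continuous_on UNIV N"
  by (rule convex_on_continuous[OF open_UNIV N_convex])

lemma N_isCont: "isCont N X"
  using N_cont continuous_on_eq_continuous_at open_UNIV by blast



lemma N_HB: "\<exists>a. (\<forall>Y. inner a Y \<le> N Y) \<and> N X \<le> inner a X"
proof (cases "X = 0")
  case True then show ?thesis by (intro exI[of _ 0]) (simp add: N_nonneg)
next
  case False
  define l where "l = N X"
  have lpos: "l > 0" using False N_eq0[of X] N_nonneg[of X] unfolding l_def by linarith
  define S where "S = {Y. N Y < l}"
  have cS: "convex S" unfolding S_def
  proof (rule convexI)
    fix x y and u v :: real assume x: "x \<in> {Y. N Y < l}" and y: "y \<in> {Y. N Y < l}" and uv: "0 \<le> u" "0 \<le> v" "u + v = 1"
    have "N (u *\<^sub>R x + v *\<^sub>R y) \<le> u * N x + v * N y"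
      using N_tri[of "u *\<^sub>R x" "v *\<^sub>R y"] uv by (simp add: N_scaleR)
    also have "\<dots> < l"
    proof (cases "u = 0")
      case True then show ?thesis using uv y by simp
    next
      case False then have "u > 0" using uv by simp
      then have "u * N x < u * l" using x by simp
      moreover have "v * N y \<le> v * l" using y uv by (simp add: mult_left_mono)
      moreover have "u * l + v * l = l" using uv by (metis distrib_right mult_1)
      ultimately show ?thesis by linarith
    qed
    finally show "u *\<^sub>R x + v *\<^sub>R y \<in> {Y. N Y < l}" by simp
  qed
  have "0 \<in> S" unfolding S_def using lpos by simp
  then have ne: "S \<noteq> {}" by auto
  have dj: "S \<inter> {X} = {}" unfolding S_def l_def by auto
  obtain a b where ab: "a \<noteq> 0" "\<forall>x\<in>S. inner a x \<le> b" "\<forall>x\<in>{X}. inner a x \<ge> b"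
    using separating_hyperplane_sets[OF cS convex_singleton ne _ dj] by blast
  have small: "(s * (l / (2 * (N Z + 1)))) *\<^sub>R Z \<in> S" if "\<bar>s\<bar> \<le> 1" for s Z
  proof -
    have nz: "N Z + 1 > 0" using N_nonneg[of Z] by linarith
    have c0: "0 \<le> l / (2 * (N Z + 1)) * N Z" using lpos nz N_nonneg[of Z] by simp
    have "N ((s * (l / (2 * (N Z + 1)))) *\<^sub>R Z) = \<bar>s\<bar> * (l / (2 * (N Z + 1)) * N Z)"
      using lpos nz by (simp add: N_scaleR abs_mult)
    also have "\<dots> \<le> l / (2 * (N Z + 1)) * N Z"
      by (rule mult_left_le_one_le[OF c0]) (use that in auto)
    also have "\<dots> < l"
    proof -
      have q: "N Z / (2 * (N Z + 1)) < 1" using nz N_nonneg[of Z] by (simp add: divide_less_eq)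
      have "l / (2 * (N Z + 1)) * N Z = l * (N Z / (2 * (N Z + 1)))" by simp
      also have "\<dots> < l * 1" using q lpos by (intro mult_strict_left_mono) auto
      finally show ?thesis by simp
    qed
    finally show ?thesis unfolding S_def by simp
  qed
  have bpos: "b > 0"
  proof (rule ccontr)
    assume "\<not> b > 0"
    have "inner a Z = 0" for Z
    proof -
      have nz: "N Z + 1 > 0" using N_nonneg[of Z] by linarith
      define c where "c = l / (2 * (N Z + 1))"
      have c: "c > 0" using lpos nz unfolding c_def by simp
      have "c *\<^sub>R Z \<in> S" using small[of 1 Z] unfolding c_def[symmetric] by (simp only: mult_1)
      then have "inner a (c *\<^sub>R Z) \<le> b" using ab(2) by blast
      moreover have "(-c) *\<^sub>R Z \<in> S" using small[of "-1" Z] unfolding c_def[symmetric] by (simp only: mult_minus1 abs_minus_cancel abs_one order_refl)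
      then have "inner a ((-c) *\<^sub>R Z) \<le> b" using ab(2) by blast
      ultimately have "c * inner a Z \<le> 0" "- c * inner a Z \<le> 0" using \<open>\<not> b > 0\<close> by auto
      then have "c * inner a Z = 0" by linarith
      then show ?thesis using c by simp
    qed
    then have "inner a a = 0" by simp
    then show False using ab(1) by simp
  qed
  define a' where "a' = (l / b) *\<^sub>R a"
  have "inner a' Y \<le> N Y" for Y
  proof (cases "Y = 0")
    case True then show ?thesis by (simp add: a'_def)
  next
    case False
    then have nY: "N Y > 0" using N_eq0[of Y] N_nonneg[of Y] by linarith
    show ?thesis
    proof (rule field_le_mult_one_interval)
      fix z :: real assume z: "0 < z" "z < 1"
      have "N ((z * l / N Y) *\<^sub>R Y) = z * l" using nY z lpos by (simp add: N_scaleR)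
      then have "(z * l / N Y) *\<^sub>R Y \<in> S" using z lpos unfolding S_def by simp
      then have "inner a ((z * l / N Y) *\<^sub>R Y) \<le> b" using ab(2) by blast
      then have "(z * l / N Y) * inner a Y \<le> b" by simp
      then have "z * (l / b * inner a Y) \<le> N Y" using nY bpos lpos z
        by (simp add: field_simps)
      then show "z * inner a' Y \<le> N Y" by (simp add: a'_def)
    qed
  qed
  moreover have "N X \<le> inner a' X"
  proof -
    have "b \<le> inner a X" using ab(3) by simp
    then have "l \<le> l / b * inner a X" using bpos lpos by (simp add: field_simps)
    then show ?thesis unfolding a'_def l_def by simp
  qed
  ultimately show ?thesis by blast
qed

lemma N_suminf:
  assumes "summable f" "\<And>n. N (f n) \<le> b n" "summable b"
  shows "N (suminf f) \<le> suminf b"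
proof -
  obtain a where a: "\<forall>Y. inner a Y \<le> N Y" "N (suminf f) \<le> inner a (suminf f)"
    using N_HB by blast
  have bl: "bounded_linear (inner a)" by (rule bounded_linear_inner_right)
  have "inner a (suminf f) = (\<Sum>n. inner a (f n))"
    using bounded_linear.suminf[OF bl assms(1)] by simp
  also have "\<dots> \<le> suminf b"
    using bounded_linear.summable[OF bl assms(1)] assms(3) a(1) assms(2)
    by (intro suminf_le) (auto intro: order_trans)
  finally show ?thesis using a(2) by simp
qed

lemma norm_le_N: "\<exists>C>0. \<forall>X. norm X \<le> C * N X"
proof -
  have "compact (sphere (0::'q cmat) 1)" by simp
  moreover have "sphere (0::'q cmat) 1 \<noteq> {}" by simp
  moreover have "continuous_on (sphere 0 1) N" using N_cont continuous_on_subset by blast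
  ultimately obtain x0 where x0: "x0 \<in> sphere 0 1" "\<forall>y\<in>sphere 0 1. N x0 \<le> N y"
    using continuous_attains_inf by blast
  have "x0 \<noteq> 0" using x0 by auto
  then have mu: "N x0 > 0" using N_eq0[of x0] N_nonneg[of x0] by linarith
  have "norm X \<le> (1 / N x0) * N X" for X
  proof (cases "X = 0")
    case True then show ?thesis by simp
  next
    case False
    then have "(1 / norm X) *\<^sub>R X \<in> sphere 0 1" by simp
    then have "N x0 \<le> N ((1 / norm X) *\<^sub>R X)" using x0 by blast
    also have "\<dots> = N X / norm X" by (simp add: N_scaleR)
    finally show ?thesis using mu False by (simp add: field_simps)
  qed
  then show ?thesis using mu by (intro exI[of _ "1 / N x0"]) auto
qed

lemma N_mpow_left: "N (mpow X n ** Y) \<le> N X ^ n * N Y"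
proof (induction n arbitrary: Y)
  case 0 then show ?case by simp
next
  case (Suc n)
  have "N (mpow X (Suc n) ** Y) = N (X ** (mpow X n ** Y))" by (simp add: matrix_mul_assoc)
  also have "\<dots> \<le> N X * N (mpow X n ** Y)" by (rule N_mult)
  also have "\<dots> \<le> N X * (N X ^ n * N Y)" using Suc N_nonneg[of X] by (simp add: mult_left_mono)
  finally show ?case by (simp add: mult_ac)
qed

lemma N_mpow_right: "N (Y ** mpow X n) \<le> N Y * N X ^ n"
proof (induction n arbitrary: Y)
  case 0 then show ?case by simp
next
  case (Suc n)
  have "N (Y ** mpow X (Suc n)) = N ((Y ** X) ** mpow X n)" by (simp add: matrix_mul_assoc)
  also have "\<dots> \<le> N (Y ** X) * N X ^ n" by (rule Suc)
  also have "\<dots> \<le> N Y * N X * N X ^ n" using N_mult[of Y X] N_nonneg[of X]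
    by (simp add: mult_right_mono)
  finally show ?case by (simp add: mult_ac)
qed

lemma N_mpow: fixes X :: "'q cmat" shows "N (mpow X n) \<le> N (mat 1) * N X ^ n"
  using N_mpow_left[of X n "mat 1"] by (simp add: mult_ac)

lemma mexp_summable: fixes X :: "'q cmat" shows "summable (\<lambda>n. (1 / fact n) *\<^sub>R mpow X n)"
proof -
  obtain C where C: "C > 0" "\<forall>X. norm X \<le> C * N X" using norm_le_N by blast
  have "summable (\<lambda>n. C * N (mat 1) * (N X ^ n / fact n))"
    using exp_sums_real[of "N X"] by (intro summable_mult) (simp add: sums_summable)
  then show ?thesis
  proof (rule summable_comparison_test')
    fix n :: nat
    have "norm ((1 / fact n) *\<^sub>R mpow X n) \<le> C * N ((1 / fact n) *\<^sub>R mpow X n)" using C by blast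
    also have "\<dots> = C * (N (mpow X n) / fact n)" by (simp add: N_scaleR)
    also have "\<dots> \<le> C * (N (mat 1) * N X ^ n / fact n)"
      using C N_mpow[of X n] by (intro mult_left_mono divide_right_mono) auto
    finally show "norm ((1 / fact n) *\<^sub>R mpow X n) \<le> C * N (mat 1) * (N X ^ n / fact n)" by simp
  qed
qed

lemma N_mexp: fixes X :: "'q cmat" shows "N (mexp X) \<le> N (mat 1) * exp (N X)"
proof -
  have "N (mexp X) \<le> (\<Sum>n. N (mat 1) * (N X ^ n / fact n))"
    unfolding mexp_def
  proof (rule N_suminf[OF mexp_summable])
    fix n show "N ((1 / fact n) *\<^sub>R mpow X n) \<le> N (mat 1) * (N X ^ n / fact n)"
      using N_mpow[of X n] by (simp add: N_scaleR divide_right_mono)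
    show "summable (\<lambda>n. N (mat 1) * (N X ^ n / fact n))"
      using exp_sums_real[of "N X"] by (intro summable_mult) (simp add: sums_summable)
  qed
  also have "\<dots> = N (mat 1) * exp (N X)"
    using sums_mult[OF exp_sums_real[of "N X"], of "N (mat 1)"] by (rule sums_unique[symmetric])
  finally show ?thesis .
qed

lemma mpow_diff:
  fixes X Y :: "'q cmat" and r :: real
  assumes "N X \<le> r" "N Y \<le> r"
  shows "N (mpow X (Suc k) - mpow Y (Suc k)) \<le> Suc k * r ^ k * N (X - Y)"
proof (induction k)
  case 0 then show ?case by simp
next
  case (Suc k)
  have r0: "0 \<le> r" using assms N_nonneg[of X] by linarith
  have eq: "mpow X (Suc (Suc k)) - mpow Y (Suc (Suc k)) =
      X ** (mpow X (Suc k) - mpow Y (Suc k)) + (X - Y) ** mpow Y (Suc k)"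
    by (simp add: matrix_diff_ldistrib' matrix_diff_rdistrib')
  have "N (mpow X (Suc (Suc k)) - mpow Y (Suc (Suc k))) \<le>
      N X * N (mpow X (Suc k) - mpow Y (Suc k)) + N (X - Y) * N Y ^ Suc k"
    unfolding eq by (rule order_trans[OF N_tri add_mono[OF N_mult N_mpow_right]])
  also have "\<dots> \<le> r * (Suc k * r ^ k * N (X - Y)) + N (X - Y) * r ^ Suc k"
    using Suc assms r0 N_nonneg by (intro add_mono mult_mono mult_left_mono power_mono) auto
  also have "\<dots> = Suc (Suc k) * r ^ Suc k * N (X - Y)" by (simp add: algebra_simps)
  finally show ?case .
qed

lemma mexp_locinj:
  fixes X Y :: "'q cmat" and r :: real
  assumes "N X \<le> r" "N Y \<le> r"
  shows "N (X - Y) * (1 - r * exp r) \<le> N (mexp X - mexp Y)"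
proof -
  have r0: "0 \<le> r" using assms N_nonneg[of X] by linarith
  define d where "d n = (1 / fact n) *\<^sub>R (mpow X n - mpow Y n)" for n
  have sd: "summable d" unfolding d_def scaleR_diff_right
    by (intro summable_diff mexp_summable)
  have "mexp X - mexp Y = suminf d"
    unfolding mexp_def d_def scaleR_diff_right by (intro suminf_diff mexp_summable)
  also have "\<dots> = (\<Sum>n. d (n + 2)) + (X - Y)"
    using suminf_split_initial_segment[OF sd, of 2] by (simp add: d_def numeral_2_eq_2)
  finally have eq: "mexp X - mexp Y = (\<Sum>n. d (n + 2)) + (X - Y)" .
  have "N (\<Sum>n. d (n + 2)) \<le> (\<Sum>n. r * N (X - Y) * (r ^ n / fact n))"
  proof (rule N_suminf)
    show "summable (\<lambda>n. d (n + 2))" by (subst summable_iff_shift) (rule sd)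
    show "summable (\<lambda>n. r * N (X - Y) * (r ^ n / fact n))"
      using exp_sums_real[of r] by (intro summable_mult) (simp add: sums_summable)
    fix n
    have "N (d (n + 2)) = N (mpow X (Suc (Suc n)) - mpow Y (Suc (Suc n))) / fact (n + 2)"
      by (simp add: d_def N_scaleR numeral_2_eq_2)
    also have "\<dots> \<le> (Suc (Suc n) * r ^ Suc n * N (X - Y)) / fact (n + 2)"
      by (intro divide_right_mono mpow_diff assms) auto
    also have "\<dots> = r ^ Suc n * N (X - Y) / fact (Suc n)"
      by (simp add: numeral_2_eq_2 field_simps del: of_nat_Suc)
    also have "\<dots> \<le> r ^ Suc n * N (X - Y) / fact n"
      using r0 N_nonneg[of "X - Y"] by (intro divide_left_mono) (auto simp: fact_mono)
    also have "\<dots> = r * N (X - Y) * (r ^ n / fact n)" by simp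
    finally show "N (d (n + 2)) \<le> r * N (X - Y) * (r ^ n / fact n)" .
  qed
  also have "\<dots> = r * N (X - Y) * exp r"
    using sums_mult[OF exp_sums_real[of r], of "r * N (X - Y)"] by (rule sums_unique[symmetric])
  finally have b: "N (\<Sum>n. d (n + 2)) \<le> r * N (X - Y) * exp r" .
  have "N (X - Y) - N (\<Sum>n. d (n + 2)) \<le> N ((X - Y) - (- (\<Sum>n. d (n + 2))))"
    using N_rev_tri[of "X - Y" "- (\<Sum>n. d (n + 2))"] N_minus by simp
  also have "\<dots> = N (mexp X - mexp Y)" unfolding eq by (simp add: algebra_simps)
  finally show ?thesis using b by (simp add: algebra_simps)
qed

end



fun dpow :: "'q::finite cmat \<Rightarrow> 'q cmat \<Rightarrow> nat \<Rightarrow> 'q cmat" where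
  "dpow X D 0 = 0"
| "dpow X D (Suc k) = D ** mpow X k + X ** dpow X D k"

lemma mpow_has_vector_derivative:
  fixes P :: "real \<Rightarrow> 'q::finite cmat"
  assumes "(P has_vector_derivative D) (at x within S)"
  shows "((\<lambda>v. mpow (P v) k) has_vector_derivative dpow (P x) D k) (at x within S)"
proof (induction k)
  case 0 then show ?case by simp
next
  case (Suc k)
  have "((\<lambda>v. P v ** mpow (P v) k) has_vector_derivative (P x ** dpow (P x) D k + D ** mpow (P x) k)) (at x within S)"
    by (rule bounded_bilinear.has_vector_derivative[OF mm_bounded_bilinear assms Suc])
  then show ?case by (simp add: add.commute)
qed

lemma matrix_mul_sum_right: "(A::'q::finite cmat) ** sum f S = (\<Sum>i\<in>S. A ** f i)"
  by (induction S rule: infinite_finite_induct) (auto simp: matrix_add_ldistrib)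

lemma two_times_cmat: "2 * (M::'q::finite cmat) = 2 *\<^sub>R M"
  by (simp add: vec_eq_iff scaleR_conv_of_real)

lemma fact_Suc_aux: "(1 / fact (Suc j)) * real (Suc j) = 1 / (fact j::real)"
  by (simp add: field_simps del: of_nat_Suc)

lemma Dsum_eq:
  fixes X D :: "'q::finite cmat"
  shows "(\<Sum>k<Suc n. (1 / fact k) *\<^sub>R dpow X D k) - D ** (\<Sum>k<n. (1 / fact k) *\<^sub>R mpow X k) =
    (\<Sum>j<n. (1 / fact (Suc j)) *\<^sub>R (dpow X D (Suc j) - real (Suc j) *\<^sub>R (D ** mpow X j)))"
proof -
  have "(\<Sum>k<Suc n. (1 / fact k) *\<^sub>R dpow X D k) = (\<Sum>j<n. (1 / fact (Suc j)) *\<^sub>R dpow X D (Suc j))"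
    by (subst sum.lessThan_Suc_shift) simp
  moreover have "D ** (\<Sum>k<n. (1 / fact k) *\<^sub>R mpow X k) = (\<Sum>j<n. (1 / fact (Suc j)) *\<^sub>R (real (Suc j) *\<^sub>R (D ** mpow X j)))"
    unfolding matrix_mul_sum_right matrix_scaleR_r scaleR_scaleR fact_Suc_aux ..
  ultimately show ?thesis by (simp add: sum_subtractf scaleR_diff_right)
qed

lemma aux_j: "(1 / fact (Suc j)) * (real j * (real j + 1) / 2 * a * d * x) = a * d / 2 * (real j * x / (fact j::real))"
proof -
  define Y where "Y = a * d / 2 * (real j * x)"
  have f: "(fact (Suc j)::real) = (real j + 1) * fact j" by simp
  have p: "(fact j::real) \<noteq> 0" "real j + 1 \<noteq> 0" by simp_all
  have e: "real j * (real j + 1) / 2 * a * d * x = (real j + 1) * Y" unfolding Y_def by (simp add: algebra_simps)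
  have "(1 / fact (Suc j)) * (real j * (real j + 1) / 2 * a * d * x) = (1 / ((real j + 1) * fact j)) * ((real j + 1) * Y)"
    by (simp only: e f)
  also have "\<dots> = Y / fact j" using p by simp
  finally show ?thesis unfolding Y_def by simp
qed

lemma sum_j_exp:
  assumes "0 \<le> (x::real)"
  shows "(\<Sum>j<n. real j * x ^ j / fact j) \<le> x * exp x"
proof (cases n)
  case 0 then show ?thesis using assms by simp
next
  case (Suc n')
  have "(\<Sum>j<Suc n'. real j * x ^ j / fact j) = (\<Sum>i<n'. real (Suc i) * x ^ Suc i / fact (Suc i))"
    by (subst sum.lessThan_Suc_shift) simp
  also have "\<dots> = x * (\<Sum>i<n'. x ^ i / fact i)"
    unfolding sum_distrib_left by (intro sum.cong refl) (simp add: field_simps del: of_nat_Suc)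
  also have "\<dots> \<le> x * exp x"
    using assms exp_sums_real[of x]
    by (intro mult_left_mono sum_le_suminf[of "\<lambda>i. x ^ i / fact i", unfolded sums_unique[OF exp_sums_real, symmetric]])
       (auto simp: sums_summable)
  finally show ?thesis using Suc by simp
qed

context bn begin

lemma ad_facts:
  "N (mbracket X Y) \<le> ad_norm N * N X * N Y" "0 \<le> ad_norm N" "ad_norm N \<le> 2"
proof -
  define Sa where "Sa = {N (mbracket X Y) | X Y. N X = 1 \<and> N Y = 1}"
  have ad: "ad_norm N = Sup Sa" unfolding ad_norm_def Sa_def ..
  have le2: "x \<le> 2" if xS: "x \<in> Sa" for x
  proof -
    obtain X1 Y1 where "x = N (mbracket X1 Y1)" "N X1 = 1" "N Y1 = 1" using xS unfolding Sa_def by blast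
    moreover have "N (X1 ** Y1 - Y1 ** X1) \<le> N (X1 ** Y1) + N (Y1 ** X1)" by (rule N_diff_tri)
    ultimately show ?thesis using N_mult[of X1 Y1] N_mult[of Y1 X1] unfolding mbracket_def by simp
  qed
  then have bdd: "bdd_above Sa" unfolding bdd_above_def by blast
  have m1: "N (mat 1 :: 'q cmat) > 0" using mat1_nz N_eq0 N_nonneg by (metis order_le_less)
  define X0 where "X0 = (1 / N (mat 1 :: 'q cmat)) *\<^sub>R (mat 1 :: 'q cmat)"
  have "N X0 = 1" unfolding X0_def using m1 by (simp add: N_scaleR)
  then have "N (mbracket X0 X0) \<in> Sa" unfolding Sa_def by blast
  then have z: "0 \<in> Sa" unfolding mbracket_def by simp
  show ad0: "0 \<le> ad_norm N" unfolding ad by (rule cSup_upper[OF z bdd])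
  show "ad_norm N \<le> 2" unfolding ad using z le2 by (intro cSup_least) auto
  show "N (mbracket X Y) \<le> ad_norm N * N X * N Y"
  proof (cases "X = 0 \<or> Y = 0")
    case True then show ?thesis using ad0 N_nonneg by (auto simp: mbracket_def)
  next
    case False
    then have pX: "N X > 0" and pY: "N Y > 0" using N_eq0 N_nonneg by (metis order_le_less)+
    define X' where "X' = (1 / N X) *\<^sub>R X"
    define Y' where "Y' = (1 / N Y) *\<^sub>R Y"
    have "N X' = 1" "N Y' = 1" unfolding X'_def Y'_def using pX pY by (simp_all add: N_scaleR)
    then have "N (mbracket X' Y') \<in> Sa" unfolding Sa_def by blast
    then have "N (mbracket X' Y') \<le> ad_norm N" unfolding ad by (rule cSup_upper[OF _ bdd])
    moreover have "mbracket X' Y' = (1 / (N X * N Y)) *\<^sub>R mbracket X Y"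
      unfolding X'_def Y'_def mbracket_def by (simp add: matrix_scaleR_l matrix_scaleR_r scaleR_diff_right mult.commute)
    ultimately have "N (mbracket X Y) / (N X * N Y) \<le> ad_norm N"
      using pX pY by (simp add: N_scaleR)
    then show ?thesis using pX pY by (simp add: field_simps)
  qed
qed

lemma N_MV:
  fixes f :: "real \<Rightarrow> 'q cmat" and G :: "real \<Rightarrow> real"
  assumes u: "0 \<le> u"
    and df: "\<And>v. v \<in> {0..u} \<Longrightarrow> (f has_vector_derivative f' v) (at v within {0..u})"
    and dG: "\<And>v. v \<in> {0..u} \<Longrightarrow> (G has_real_derivative G' v) (at v within {0..u})"
    and le: "\<And>v. v \<in> {0..u} \<Longrightarrow> N (f' v) \<le> G' v"
  shows "N (f u - f 0) \<le> G u - G 0"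
proof -
  obtain a where a: "\<forall>Y. inner a Y \<le> N Y" "N (f u - f 0) \<le> inner a (f u - f 0)"
    using N_HB by blast
  define h where "h v = inner a (f v) - G v" for v
  have dh: "(h has_derivative (*) (inner a (f' v) - G' v)) (at v within {0..u})" if "0 \<le> v" "v \<le> u" for v
  proof -
    have "((\<lambda>v. inner a (f v)) has_vector_derivative inner a (f' v)) (at v within {0..u})"
      by (rule bounded_linear.has_vector_derivative[OF bounded_linear_inner_right df]) (use that in auto)
    then have "((\<lambda>v. inner a (f v)) has_real_derivative inner a (f' v)) (at v within {0..u})"
      by (simp add: has_real_derivative_iff_has_vector_derivative)
    then have "(h has_real_derivative (inner a (f' v) - G' v)) (at v within {0..u})"
      unfolding h_def using dG that by (intro DERIV_diff) auto
    then show ?thesis by (simp add: has_field_derivative_def)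
  qed
  obtain x where x: "x \<in> {0..u}" "h u - h 0 = (inner a (f' x) - G' x) * (u - 0)"
    using mvt_very_simple[OF u dh] by blast
  have "inner a (f' x) - G' x \<le> 0" using a(1) le[OF x(1)] by (smt (verit))
  then have "h u - h 0 \<le> 0" using x(2) u by (simp add: mult_nonpos_nonneg)
  then have "inner a (f u - f 0) \<le> G u - G 0" unfolding h_def by (simp add: inner_diff_right)
  then show ?thesis using a(2) by linarith
qed

lemma dpow_bound:
  "N (dpow X D (Suc j) - real (Suc j) *\<^sub>R (D ** mpow X j)) \<le> real j * (real j + 1) / 2 * ad_norm N * N D * N X ^ j"
proof (induction j)
  case 0 then show ?case by simp
next
  case (Suc j)
  have eq: "dpow X D (Suc (Suc j)) - real (Suc (Suc j)) *\<^sub>R (D ** mpow X (Suc j)) =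
    X ** (dpow X D (Suc j) - real (Suc j) *\<^sub>R (D ** mpow X j)) + real (Suc j) *\<^sub>R (mbracket X D ** mpow X j)"
    by (simp add: mbracket_def matrix_diff_ldistrib' matrix_diff_rdistrib' matrix_add_ldistrib matrix_add_rdistrib'
        matrix_scaleR_l matrix_scaleR_r matrix_mul_assoc algebra_simps two_times_cmat)
  have "N (dpow X D (Suc (Suc j)) - real (Suc (Suc j)) *\<^sub>R (D ** mpow X (Suc j))) \<le>
     N X * N (dpow X D (Suc j) - real (Suc j) *\<^sub>R (D ** mpow X j)) + real (Suc j) * (N (mbracket X D) * N X ^ j)"
    unfolding eq by (rule order_trans[OF N_tri add_mono[OF N_mult]]) (simp add: N_scaleR N_mpow_right del: of_nat_Suc)
  also have "\<dots> \<le> N X * (real j * (real j + 1) / 2 * ad_norm N * N D * N X ^ j) + real (Suc j) * (ad_norm N * N X * N D * N X ^ j)"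
    using Suc ad_facts N_nonneg
    by (intro add_mono mult_left_mono mult_right_mono) (auto simp del: of_nat_Suc)
  also have "\<dots> = real (Suc j) * (real (Suc j) + 1) / 2 * ad_norm N * N D * N X ^ Suc j"
    by (simp add: field_simps del: of_nat_Suc) (simp add: algebra_simps)
  finally show ?case .
qed

lemma Dsum_bound:
  "N ((\<Sum>k<Suc n. (1 / fact k) *\<^sub>R dpow X D k) - D ** (\<Sum>k<n. (1 / fact k) *\<^sub>R mpow X k))
    \<le> ad_norm N * N D * (N X * exp (N X)) / 2"
proof -
  have "N ((\<Sum>k<Suc n. (1 / fact k) *\<^sub>R dpow X D k) - D ** (\<Sum>k<n. (1 / fact k) *\<^sub>R mpow X k))
      \<le> (\<Sum>j<n. N ((1 / fact (Suc j)) *\<^sub>R (dpow X D (Suc j) - real (Suc j) *\<^sub>R (D ** mpow X j))))"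
    unfolding Dsum_eq by (rule N_sum)
  also have "\<dots> \<le> (\<Sum>j<n. (1 / fact (Suc j)) * (real j * (real j + 1) / 2 * ad_norm N * N D * N X ^ j))"
  proof (intro sum_mono)
    fix j
    have "N ((1 / fact (Suc j)) *\<^sub>R (dpow X D (Suc j) - real (Suc j) *\<^sub>R (D ** mpow X j)))
       = \<bar>1 / fact (Suc j)\<bar> * N (dpow X D (Suc j) - real (Suc j) *\<^sub>R (D ** mpow X j))" by (rule N_scaleR)
    also have "\<dots> \<le> \<bar>1 / fact (Suc j)\<bar> * (real j * (real j + 1) / 2 * ad_norm N * N D * N X ^ j)"
      by (rule mult_left_mono[OF dpow_bound]) simp
    finally show "N ((1 / fact (Suc j)) *\<^sub>R (dpow X D (Suc j) - real (Suc j) *\<^sub>R (D ** mpow X j)))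
       \<le> (1 / fact (Suc j)) * (real j * (real j + 1) / 2 * ad_norm N * N D * N X ^ j)" by (simp del: dpow.simps)
  qed
  also have "\<dots> = ad_norm N * N D / 2 * (\<Sum>j<n. real j * N X ^ j / fact j)"
    unfolding sum_distrib_left by (intro sum.cong refl) (rule aux_j)
  also have "\<dots> \<le> ad_norm N * N D / 2 * (N X * exp (N X))"
    using ad_facts N_nonneg by (intro mult_left_mono sum_j_exp) auto
  finally show ?thesis by simp
qed

end


context bn begin

lemma P_bound:
  fixes A :: "real \<Rightarrow> 'q cmat"
  assumes contA: "continuous_on {0..t} A" and Am: "\<And>s. s \<in> {0..t} \<Longrightarrow> N (A s) \<le> m"
    and v: "v \<in> {0..t}"
  shows "N (integral {0..v} A) \<le> v * m"
proof -
  have sub: "{0..v} \<subseteq> {0..t}" using v by auto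
  have "N (integral {0..v} A - integral {0..0} A) \<le> m * v - m * 0"
  proof (rule N_MV[where f' = A and G' = "\<lambda>_. m"])
    show "0 \<le> v" using v by simp
    fix x assume x: "x \<in> {0..v}"
    show "((\<lambda>u. integral {0..u} A) has_vector_derivative A x) (at x within {0..v})"
      by (rule has_vector_derivative_within_subset[OF integral_has_vector_derivative[OF contA] sub]) (use x v in auto)
    show "((*) m has_real_derivative m) (at x within {0..v})"
      by (auto intro!: derivative_eq_intros)
    show "N (A x) \<le> m" using x v by (intro Am) auto
  qed
  then show ?thesis by (simp add: mult.commute)
qed

lemma E_bound:
  fixes X :: "'q cmat"
  shows "N (\<Sum>k<n. (1 / fact k) *\<^sub>R mpow X k) \<le> N (mat 1) * exp (N X)"
proof -
  have "N (\<Sum>k<n. (1 / fact k) *\<^sub>R mpow X k) \<le> (\<Sum>k<n. N ((1 / fact k) *\<^sub>R mpow X k))" by (rule N_sum)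
  also have "\<dots> \<le> (\<Sum>k<n. N (mat 1) * (N X ^ k / fact k))"
    by (intro sum_mono) (simp add: N_scaleR N_mpow divide_right_mono)
  also have "\<dots> = N (mat 1) * (\<Sum>k<n. N X ^ k / fact k)" by (simp add: sum_distrib_left)
  also have "\<dots> \<le> N (mat 1) * exp (N X)"
    using exp_sums_real[of "N X"] N_nonneg[of "mat 1"] N_nonneg[of X]
    by (intro mult_left_mono sum_le_suminf[of "\<lambda>i. N X ^ i / fact i", unfolded sums_unique[OF exp_sums_real, symmetric]])
       (auto simp: sums_summable)
  finally show ?thesis .
qed

lemma mpow_zero: "mpow (0::'q cmat) (Suc k) = 0" by simp

lemma E0: "(\<Sum>k<Suc n. (1 / fact k) *\<^sub>R mpow (0::'q cmat) k) = mat 1"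
  by (subst sum.lessThan_Suc_shift) simp

lemma claim2:
  fixes A a :: "real \<Rightarrow> 'q cmat" and t m Ca :: real
  assumes t0: "0 \<le> t" and contA: "continuous_on {0..t} A" and Am: "\<And>s. s \<in> {0..t} \<Longrightarrow> N (A s) \<le> m"
    and da: "\<And>s. s \<in> {0..t} \<Longrightarrow> (a has_vector_derivative (A s ** a s)) (at s within {0..t})"
    and a0: "a 0 = mat 1" and aC: "\<And>s. s \<in> {0..t} \<Longrightarrow> N (a s) \<le> Ca" and p1: "t * m < 1"
  shows "N (a t - mexp (integral {0..t} A)) \<le> ad_norm N * exp (t * m) * (t * m)^2 / 4 / (1 - t * m)"
proof -
  define P where "P v = integral {0..v} A" for v
  define p where "p = t * m"
  define ad where "ad = ad_norm N"
  have ad0: "0 \<le> ad" unfolding ad_def using ad_facts by simp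
  have m0: "0 \<le> m" using Am[of 0] t0 N_nonneg[of "A 0"] by auto
  have p0: "0 \<le> p" unfolding p_def using t0 m0 by simp
  have p1': "p < 1" unfolding p_def using p1 .
  have dP: "(P has_vector_derivative A v) (at v within {0..t})" if "v \<in> {0..t}" for v
    unfolding P_def by (rule integral_has_vector_derivative[OF contA that])
  have NP: "N (P v) \<le> v * m" if "v \<in> {0..t}" for v
    unfolding P_def by (rule P_bound[OF contA Am that])
  have NPp: "N (P v) \<le> p" if "v \<in> {0..t}" for v
    using NP[OF that] that m0 unfolding p_def by (meson atLeastAtMost_iff mult_right_mono order_trans)
  have P0: "P 0 = 0" unfolding P_def by simp
  define E where "E n v = (\<Sum>k<n. (1 / fact k) *\<^sub>R mpow (P v) k)" for n v
  define DE where "DE n v = (\<Sum>k<n. (1 / fact k) *\<^sub>R dpow (P v) (A v) k)" for n v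
  have dE: "(E n has_vector_derivative DE n v) (at v within {0..t})" if "v \<in> {0..t}" for n v
    unfolding E_def DE_def
    by (intro has_vector_derivative_sum bounded_linear.has_vector_derivative[OF bounded_linear_scaleR_right]
         mpow_has_vector_derivative dP that)
  have bnd: "N (a t - E (Suc n) t) \<le> (p * (p ^ n / fact n) + ad * exp p * p^2 / 4) / (1 - p)" for n
  proof -
    define w where "w v = N (a v - E (Suc n) v)" for v
    define W where "W = (SUP v\<in>{0..t}. w v)"
    have wC: "w v \<le> Ca + N (mat 1) * exp p" if "v \<in> {0..t}" for v
    proof -
      have "w v \<le> N (a v) + N (E (Suc n) v)" unfolding w_def by (rule N_diff_tri)
      also have "\<dots> \<le> Ca + N (mat 1) * exp (N (P v))" unfolding E_def by (intro add_mono aC that E_bound)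
      also have "\<dots> \<le> Ca + N (mat 1) * exp p" using NPp[OF that] N_nonneg[of "mat 1"] by (intro add_mono mult_left_mono) auto
      finally show ?thesis .
    qed
    have bdd: "bdd_above (w ` {0..t})" using wC by (intro bdd_aboveI2) auto
    have wW: "w v \<le> W" if "v \<in> {0..t}" for v unfolding W_def by (rule cSUP_upper[OF that bdd])
    have W0: "0 \<le> W" using wW[of 0] t0 N_nonneg unfolding w_def by (meson atLeastAtMost_iff order_trans order_refl)
    define G where "G v = (m * W + m * (p ^ n / fact n)) * v + ad * m^2 * exp p * v^2 / 4" for v
    define G' where "G' v = (m * W + m * (p ^ n / fact n)) + ad * m^2 * exp p * v / 2" for v
    have f0: "a 0 - E (Suc n) 0 = 0" unfolding E_def P0 a0 E0 by simp
    have keyb: "N (A v ** a v - DE (Suc n) v) \<le> G' v" if v: "v \<in> {0..t}" for v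
    proof -
      have Es: "E (Suc n) v = E n v + (1 / fact n) *\<^sub>R mpow (P v) n" unfolding E_def by simp
      have eq: "A v ** a v - DE (Suc n) v = A v ** (a v - E (Suc n) v) + (1 / fact n) *\<^sub>R (A v ** mpow (P v) n)
                 - (DE (Suc n) v - A v ** E n v)"
        unfolding Es by (simp add: matrix_diff_ldistrib' matrix_add_ldistrib matrix_scaleR_r algebra_simps)
      have b1: "N (A v ** (a v - E (Suc n) v)) \<le> m * W"
        using N_mult[of "A v" "a v - E (Suc n) v"] Am[OF v] wW[OF v] N_nonneg m0 unfolding w_def
        by (meson mult_mono order_trans)
      have b2: "N ((1 / fact n) *\<^sub>R (A v ** mpow (P v) n)) \<le> m * (p ^ n / fact n)"
      proof -
        have "N ((1 / fact n) *\<^sub>R (A v ** mpow (P v) n)) = N (A v ** mpow (P v) n) / fact n"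
          by (simp add: N_scaleR)
        also have "\<dots> \<le> (N (A v) * N (P v) ^ n) / fact n"
          by (intro divide_right_mono N_mpow_right) simp
        also have "\<dots> \<le> (m * p ^ n) / fact n"
          using Am[OF v] NPp[OF v] N_nonneg m0
          by (intro divide_right_mono mult_mono power_mono) auto
        finally show ?thesis by simp
      qed
      have b3: "N (DE (Suc n) v - A v ** E n v) \<le> ad * m^2 * exp p * v / 2"
      proof -
        have "N (DE (Suc n) v - A v ** E n v) \<le> ad * N (A v) * (N (P v) * exp (N (P v))) / 2"
          unfolding DE_def E_def ad_def by (rule Dsum_bound)
        also have "\<dots> \<le> ad * m * ((v * m) * exp p) / 2"
          using Am[OF v] NP[OF v] NPp[OF v] N_nonneg ad0 m0 v
          by (intro divide_right_mono mult_mono mult_left_mono) auto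
        finally show ?thesis by (simp add: power2_eq_square mult_ac)
      qed
      have "N (A v ** a v - DE (Suc n) v) \<le> N (A v ** (a v - E (Suc n) v)) + N ((1 / fact n) *\<^sub>R (A v ** mpow (P v) n))
                 + N (DE (Suc n) v - A v ** E n v)"
        unfolding eq by (meson N_diff_tri N_tri add_mono order_trans order_refl)
      also have "\<dots> \<le> G' v" unfolding G'_def using b1 b2 b3 by simp
      finally show ?thesis .
    qed
    have wG: "w u \<le> G u" if u: "u \<in> {0..t}" for u
    proof -
      have sub: "{0..u} \<subseteq> {0..t}" using u by auto
      have "N ((a u - E (Suc n) u) - (a 0 - E (Suc n) 0)) \<le> G u - G 0"
      proof (rule N_MV[where f' = "\<lambda>v. A v ** a v - DE (Suc n) v" and G' = G'])
        show "0 \<le> u" using u by simp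
        fix v assume v: "v \<in> {0..u}"
        then have vt: "v \<in> {0..t}" using sub by auto
        show "((\<lambda>v. a v - E (Suc n) v) has_vector_derivative A v ** a v - DE (Suc n) v) (at v within {0..u})"
          by (intro has_vector_derivative_diff has_vector_derivative_within_subset[OF da[OF vt] sub]
              has_vector_derivative_within_subset[OF dE[OF vt] sub])
        show "(G has_real_derivative G' v) (at v within {0..u})"
          unfolding G_def G'_def by (auto intro!: derivative_eq_intros simp: power2_eq_square)
        show "N (A v ** a v - DE (Suc n) v) \<le> G' v" by (rule keyb[OF vt])
      qed
      then show ?thesis unfolding w_def f0 by (simp add: G_def)
    qed
    have Gmono: "G u \<le> G t" if u: "u \<in> {0..t}" for u
      unfolding G_def using u m0 W0 p0 ad0
      by (intro add_mono mult_left_mono divide_right_mono power_mono) auto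
    have "W \<le> G t" unfolding W_def using t0 wG Gmono by (intro cSUP_least) (auto intro: order_trans)
    also have "G t = p * W + p * (p ^ n / fact n) + ad * exp p * p^2 / 4"
      unfolding G_def p_def by (simp add: algebra_simps power2_eq_square)
    finally have "W * (1 - p) \<le> p * (p ^ n / fact n) + ad * exp p * p^2 / 4" by (simp add: algebra_simps)
    then have "W \<le> (p * (p ^ n / fact n) + ad * exp p * p^2 / 4) / (1 - p)" using p1' by (simp add: field_simps)
    moreover have "w t \<le> W" using wW t0 by simp
    ultimately show ?thesis unfolding w_def by linarith
  qed
  have lim1: "(\<lambda>n. N (a t - E (Suc n) t)) \<longlonglongrightarrow> N (a t - mexp (P t))"
  proof -
    have "(\<lambda>n. E n t) \<longlonglongrightarrow> mexp (P t)" unfolding E_def mexp_def by (rule summable_LIMSEQ[OF mexp_summable])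
    then have "(\<lambda>n. E (Suc n) t) \<longlonglongrightarrow> mexp (P t)" by (rule LIMSEQ_Suc)
    then show ?thesis by (intro isCont_tendsto_compose[OF N_isCont] tendsto_diff tendsto_const)
  qed
  have lim2: "(\<lambda>n. (p * (p ^ n / fact n) + ad * exp p * p^2 / 4) / (1 - p)) \<longlonglongrightarrow> (p * 0 + ad * exp p * p^2 / 4) / (1 - p)"
    using summable_LIMSEQ_zero[OF sums_summable[OF exp_sums_real[of p]]] p1'
    by (intro tendsto_intros) auto
  have "N (a t - mexp (P t)) \<le> (p * 0 + ad * exp p * p^2 / 4) / (1 - p)"
    by (rule tendsto_le[OF trivial_limit_sequentially lim2 lim1]) (use bnd in auto)
  then show ?thesis unfolding P_def p_def ad_def by simp
qed

end


lemma g_deriv: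
  assumes "1 - exp (- z) \<noteq> (0::complex)"
  shows "((\<lambda>z. z / (1 - exp (- z))) has_field_derivative ((1 - exp (- z)) - z * exp (- z)) / (1 - exp (- z))^2) (at z)"
  using assms by (auto intro!: derivative_eq_intros simp: power2_eq_square)

lemma exp_pi_ge: "exp pi \<ge> (10::real)"
proof -
  have e4: "exp pi = exp (pi / 4) ^ 4" using exp_of_nat_mult[of 4 "pi / 4"] by simp
  have x1: "1 + pi / 4 \<le> exp (pi / 4)" by (rule exp_ge_add_one_self)
  have "(157/50::real) \<le> pi" using pi_approx(1) by simp
  then have "(357/200::real) \<le> 1 + pi / 4" by linarith
  with x1 have a: "(357/200::real) \<le> exp (pi / 4)" by linarith
  have "(357/200::real) ^ 4 \<le> exp (pi / 4) ^ 4" by (rule power_mono[OF a]) simp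
  moreover have "(10::real) \<le> (357/200) ^ 4" by (simp add: power_divide le_divide_eq)
  ultimately show ?thesis unfolding e4 by linarith
qed

lemma B2_lower:
  assumes "\<forall>z. cmod z \<le> pi \<longrightarrow> cmod (deriv gfun z) \<le> B2"
  shows "B2 \<ge> 11 / 20"
proof -
  define z0 where "z0 = complex_of_real pi"
  define e where "e = exp (- pi)"
  have e0: "0 < e" unfolding e_def by simp
  have e1: "e \<le> 1 / 10" unfolding e_def using exp_pi_ge by (simp add: exp_minus field_simps)
  have ez: "exp (- z0) = complex_of_real e" unfolding z0_def e_def by (simp add: exp_of_real[symmetric])
  have oe: "1 - exp (- z0) = complex_of_real (1 - e)" unfolding ez by simp
  have "1 - e \<noteq> 0" using e1 by simp
  then have nz: "1 - exp (- z0) \<noteq> 0" unfolding oe by simp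
  define d where "d = ((1 - e) - pi * e) / (1 - e)^2"
  have D: "((1 - exp (- z0)) - z0 * exp (- z0)) / (1 - exp (- z0))^2 = complex_of_real d"
    unfolding ez by (simp add: d_def z0_def)
  have "(gfun has_field_derivative complex_of_real d) (at z0)"
  proof (rule has_field_derivative_transform_within_open[OF g_deriv[OF nz, unfolded D] open_delete[OF open_UNIV, of 0]])
    show "z0 \<in> UNIV - {0}" unfolding z0_def by simp
    fix y :: complex assume "y \<in> UNIV - {0}" then show "y / (1 - exp (- y)) = gfun y" by (simp add: gfun_def)
  qed
  then have "deriv gfun z0 = complex_of_real d" by (rule DERIV_imp_deriv)
  moreover have "cmod z0 \<le> pi" unfolding z0_def by simp
  ultimately have "\<bar>d\<bar> \<le> B2" using assms by auto
  moreover have "d \<ge> 11 / 20"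
  proof -
    have pi4: "pi \<le> (63/20::real)" using pi_approx(2) by simp
    have "pi * e \<le> 63/20 * (1/10)" using pi4 e1 e0 by (intro mult_mono) auto
    then have num: "(1 - e) - pi * e \<ge> 11 / 20" using e1 by simp
    have den: "0 < (1 - e)^2" "(1 - e)^2 \<le> 1" using e0 e1 by (auto simp: power_le_one)
    have "(1 - e) - pi * e \<le> ((1 - e) - pi * e) / (1 - e)^2"
      using num den by (simp add: le_divide_eq)
    then show ?thesis using num unfolding d_def by linarith
  qed
  ultimately show ?thesis by linarith
qed

context bn begin

lemma QP_bound:
  fixes A a Q :: "real \<Rightarrow> 'q cmat" and T u mu :: real
  assumes contA: "continuous_on {0..T} A"
    and da: "\<forall>s\<in>{0..T}. (a has_vector_derivative (A s ** a s)) (at s within {0..T})"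
    and a0: "a 0 = mat 1" and aQ: "\<forall>s\<in>{0..T}. mexp (Q s) = a s"
    and u: "u \<in> {0..T}" and Am: "\<forall>s\<in>{0..u}. N (A s) \<le> mu" and mu0: "0 \<le> mu"
    and small: "u * mu \<le> 1/100" and Qr: "\<forall>v\<in>{0..u}. N (Q v) \<le> 1/20"
  shows "N (Q u - integral {0..u} A) \<le> 3/10 * (ad_norm N * (u * mu)^2)"
proof -
  define p where "p = u * mu"
  define ad where "ad = ad_norm N"
  define K where "K = ad * p^2"
  have ad0: "0 \<le> ad" unfolding ad_def using ad_facts by simp
  have K0: "0 \<le> K" unfolding K_def using ad0 by simp
  have u0: "0 \<le> u" using u by simp
  have p0: "0 \<le> p" unfolding p_def using u0 mu0 by simp
  have sub: "{0..u} \<subseteq> {0..T}" using u by auto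
  have contu: "continuous_on {0..u} A" using contA sub continuous_on_subset by blast
  have aC: "N (a s) \<le> N (mat 1) * exp (1/20)" if s: "s \<in> {0..u}" for s
  proof -
    have "N (a s) = N (mexp (Q s))" using aQ s sub by auto
    also have "\<dots> \<le> N (mat 1) * exp (N (Q s))" by (rule N_mexp)
    also have "\<dots> \<le> N (mat 1) * exp (1/20)" using Qr s N_nonneg[of "mat 1"] by (intro mult_left_mono) auto
    finally show ?thesis .
  qed
  have c2: "N (a u - mexp (integral {0..u} A)) \<le> ad * exp p * p^2 / 4 / (1 - p)"
    unfolding ad_def p_def
  proof (rule claim2[OF u0 contu])
    show "\<And>s. s \<in> {0..u} \<Longrightarrow> N (A s) \<le> mu" using Am by auto
    show "\<And>s. s \<in> {0..u} \<Longrightarrow> (a has_vector_derivative A s ** a s) (at s within {0..u})"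
    proof -
      fix s assume s: "s \<in> {0..u}"
      then have sT: "s \<in> {0..T}" using sub by auto
      show "(a has_vector_derivative A s ** a s) (at s within {0..u})"
        by (rule has_vector_derivative_within_subset[OF bspec[OF da sT] sub])
    qed
    show "a 0 = mat 1" by (rule a0)
    show "\<And>s. s \<in> {0..u} \<Longrightarrow> N (a s) \<le> N (mat 1) * exp (1/20)" by (rule aC)
    show "u * mu < 1" using small by simp
  qed
  have NP: "N (integral {0..u} A) \<le> 1/20"
    using P_bound[OF contu, of mu u] Am u0 small by auto
  have Qu: "N (Q u) \<le> 1/20" using Qr u0 by auto
  have li: "N (Q u - integral {0..u} A) * (1 - 1/20 * exp (1/20)) \<le> N (a u - mexp (integral {0..u} A))"
    using mexp_locinj[OF Qu NP] aQ u by auto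
  have e1: "exp p \<le> 51/50"
  proof -
    have "norm (exp p) \<le> 1 + 2 * norm p" using p0 small unfolding p_def by (intro exp_bound_lemma) auto
    then show ?thesis using p0 small unfolding p_def by simp
  qed
  have e2: "exp (1/20::real) \<le> 11/10"
  proof -
    have "norm (exp (1/20::real)) \<le> 1 + 2 * norm (1/20::real)" by (intro exp_bound_lemma) auto
    then show ?thesis by simp
  qed
  have L: "N (Q u - integral {0..u} A) * (189/200) \<le> N (Q u - integral {0..u} A) * (1 - 1/20 * exp (1/20))"
    using e2 N_nonneg by (intro mult_left_mono) auto
  have R0: "exp p / (4 * (1 - p)) \<le> (51/50) / (4 * (99/100))"
    using e1 p0 small unfolding p_def by (intro frac_le) auto
  have R: "ad * exp p * p^2 / 4 / (1 - p) \<le> K * (51/198)"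
  proof -
    have "ad * exp p * p^2 / 4 / (1 - p) = K * (exp p / (4 * (1 - p)))" unfolding K_def by simp
    also have "\<dots> \<le> K * ((51/50) / (4 * (99/100)))" using R0 K0 by (intro mult_left_mono) auto
    finally show ?thesis by simp
  qed
  have "N (Q u - integral {0..u} A) * (189/200) \<le> K * (51/198)" using L li c2 R by linarith
  then have "N (Q u - integral {0..u} A) \<le> 3/10 * K" using K0 by linarith
  then show ?thesis unfolding K_def ad_def p_def .
qed

lemma bootstrap:
  fixes A a Q :: "real \<Rightarrow> 'q cmat" and T t m :: real
  assumes contA: "continuous_on {0..T} A"
    and da: "\<forall>s\<in>{0..T}. (a has_vector_derivative (A s ** a s)) (at s within {0..T})"
    and a0: "a 0 = mat 1" and aQ: "\<forall>s\<in>{0..T}. mexp (Q s) = a s"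
    and contQ: "continuous_on {0..T} Q" and Q0: "Q 0 = 0"
    and t: "t \<in> {0..T}" and Am: "\<forall>s\<in>{0..t}. N (A s) \<le> m" and m0: "0 \<le> m"
    and small: "t * m \<le> 1/100"
  shows "\<forall>v\<in>{0..t}. N (Q v) \<le> 1/20"
proof (rule ccontr)
  define g where "g v = N (Q v)" for v
  have t0: "0 \<le> t" using t by simp
  have sub: "{0..t} \<subseteq> {0..T}" using t by auto
  have contg: "continuous_on {0..t} g" unfolding g_def
    using continuous_on_compose2[OF N_cont continuous_on_subset[OF contQ sub]] by auto
  have strict: "g u < 1/20" if u: "u \<in> {0..t}" and all: "\<forall>v\<in>{0..u}. g v \<le> 1/20" for u
  proof -
    have uT: "u \<in> {0..T}" using u sub by auto
    have "u * m \<le> t * m" using u m0 by (intro mult_right_mono) auto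
    then have um: "u * m \<le> 1/100" using small by linarith
    have um0: "0 \<le> u * m" using u m0 by simp
    have Amu: "\<forall>s\<in>{0..u}. N (A s) \<le> m" using Am u by auto
    have QP: "N (Q u - integral {0..u} A) \<le> 3/10 * (ad_norm N * (u * m)^2)"
      by (rule QP_bound[OF contA da a0 aQ uT Amu m0 um]) (use all g_def in auto)
    have contu: "continuous_on {0..u} A" using contA uT continuous_on_subset by fastforce
    have NP: "N (integral {0..u} A) \<le> u * m" using P_bound[OF contu, of m u] Amu u by auto
    have "(u * m)^2 \<le> (1/100)^2" by (rule power_mono[OF um um0])
    then have sq: "(u * m)^2 \<le> 1/10000" by (simp add: power_divide)
    have "3/10 * (ad_norm N * (u * m)^2) \<le> 3/10 * (2 * (1/10000))"
      using ad_facts sq by (intro mult_left_mono mult_mono) auto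
    moreover have "g u \<le> N (integral {0..u} A) + N (Q u - integral {0..u} A)"
      unfolding g_def using N_tri[of "integral {0..u} A" "Q u - integral {0..u} A"] by simp
    ultimately show ?thesis using QP NP um by linarith
  qed
  assume "\<not> (\<forall>v\<in>{0..t}. N (Q v) \<le> 1/20)"
  then obtain u where u: "u \<in> {0..t}" "g u > 1/20" unfolding g_def by auto
  have g0: "g 0 = 0" unfolding g_def Q0 by simp
  have ivt: "\<exists>y. 0 \<le> y \<and> y \<le> v \<and> g y = 1/20" if v: "v \<in> {0..t}" "g v \<ge> 1/20" for v
    using IVT'[of g 0 "1/20" v] g0 v contg continuous_on_subset[of "{0..t}" g "{0..v}"] by auto
  define S where "S = {0..t} \<inter> g -` {1/20}"
  have "closed S" unfolding S_def by (rule continuous_closed_preimage[OF contg]) auto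
  moreover have "bounded S" unfolding S_def by (rule bounded_subset[of "{0..t}"]) auto
  ultimately have cS: "compact S" by (simp add: compact_eq_bounded_closed)
  obtain y where y: "0 \<le> y" "y \<le> u" "g y = 1/20" using ivt[OF u(1)] u(2) by auto
  have "y \<in> S" unfolding S_def using y u(1) by auto
  then have "S \<noteq> {}" by auto
  then obtain x0 where x0: "x0 \<in> S" "\<forall>z\<in>S. x0 \<le> z" using compact_attains_inf[OF cS] by blast
  have x0t: "x0 \<in> {0..t}" and gx0: "g x0 = 1/20" using x0(1) unfolding S_def by auto
  have "\<forall>v\<in>{0..x0}. g v \<le> 1/20"
  proof
    fix v assume v: "v \<in> {0..x0}"
    show "g v \<le> 1/20"
    proof (rule ccontr)
      assume "\<not> g v \<le> 1/20"
      then have vt: "v \<in> {0..t}" and gv: "g v \<ge> 1/20" using v x0t by auto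
      obtain z where z: "0 \<le> z" "z \<le> v" "g z = 1/20" using ivt[OF vt gv] by auto
      have "z \<in> S" unfolding S_def using z vt by auto
      then have "x0 \<le> z" using x0(2) by blast
      then have "z = v" using z v by auto
      then show False using z \<open>\<not> g v \<le> 1/20\<close> by simp
    qed
  qed
  then have "g x0 < 1/20" by (rule strict[OF x0t])
  then show False using gx0 by simp
qed

end

theorem lemmaA1:
  fixes L :: "'q::finite cmat set" and N :: "'q cmat \<Rightarrow> real" and B1 B2 :: real
  assumes "lie_subalgebra L"
    and "banach_algebra_norm N"
    and "\<forall>z. cmod z \<le> pi \<longrightarrow> cmod (gfun z) \<le> B1"
    and "\<forall>z. cmod z \<le> pi \<longrightarrow> cmod (deriv gfun z) \<le> B2"
  shows "\<exists>\<epsilon>>0. \<forall>(T::real) (A::real \<Rightarrow> 'q cmat) (a::real \<Rightarrow> 'q cmat) (Q::real \<Rightarrow> 'q cmat) (t::real).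
           continuous_on {0..T} A \<and> (\<forall>s\<in>{0..T}. A s \<in> L) \<and>
           a 0 = mat 1 \<and>
           (\<forall>s\<in>{0..T}. (a has_vector_derivative (A s ** a s)) (at s within {0..T})) \<and>
           continuous_on {0..T} Q \<and> (\<forall>s\<in>{0..T}. Q s \<in> L) \<and> Q 0 = 0 \<and>
           (\<forall>s\<in>{0..T}. mexp (Q s) = a s) \<and>
           t \<in> {0..T} \<and> t * Linf N A t < \<epsilon>
           \<longrightarrow> N (Q t - integral {0..t} A)
               \<le> ad_norm N * t\<^sup>2 * B2\<^sup>2 / (1 - ad_norm N * B2 * \<epsilon>) * (Linf N A t)\<^sup>2"
proof -
  interpret bn N using assms(2) by unfold_locales
  have B2: "B2 \<ge> 11/20" by (rule B2_lower[OF assms(4)])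
  define \<epsilon> where "\<epsilon> = 1 / (100 * (1 + B2))"
  have e0: "\<epsilon> > 0" unfolding \<epsilon>_def using B2 by simp
  have e1: "\<epsilon> \<le> 1/100" unfolding \<epsilon>_def using B2 by (simp add: field_simps)
  have den: "0 < 1 - ad_norm N * B2 * \<epsilon>" "1 - ad_norm N * B2 * \<epsilon> \<le> 1"
  proof -
    have "ad_norm N * B2 * \<epsilon> \<le> 2 * B2 * \<epsilon>" using ad_facts B2 e0 by (intro mult_right_mono) auto
    also have "\<dots> = 2 * B2 / (100 * (1 + B2))" unfolding \<epsilon>_def by simp
    also have "\<dots> < 1" using B2 by (simp add: field_simps)
    finally show "0 < 1 - ad_norm N * B2 * \<epsilon>" by simp
    show "1 - ad_norm N * B2 * \<epsilon> \<le> 1" using ad_facts B2 e0 by simp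
  qed
  show ?thesis
  proof (intro exI[of _ \<epsilon>] conjI e0 allI impI)
    fix T t :: real and A a Q :: "real \<Rightarrow> 'q cmat"
    assume H: "continuous_on {0..T} A \<and> (\<forall>s\<in>{0..T}. A s \<in> L) \<and> a 0 = mat 1 \<and>
           (\<forall>s\<in>{0..T}. (a has_vector_derivative (A s ** a s)) (at s within {0..T})) \<and>
           continuous_on {0..T} Q \<and> (\<forall>s\<in>{0..T}. Q s \<in> L) \<and> Q 0 = 0 \<and>
           (\<forall>s\<in>{0..T}. mexp (Q s) = a s) \<and> t \<in> {0..T} \<and> t * Linf N A t < \<epsilon>"
    then have contA: "continuous_on {0..T} A" and a0: "a 0 = mat 1"
      and da: "\<forall>s\<in>{0..T}. (a has_vector_derivative (A s ** a s)) (at s within {0..T})"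
      and contQ: "continuous_on {0..T} Q" and Q0: "Q 0 = 0"
      and aQ: "\<forall>s\<in>{0..T}. mexp (Q s) = a s" and t: "t \<in> {0..T}" and tl: "t * Linf N A t < \<epsilon>"
      by auto
    define m where "m = Linf N A t"
    have sub: "{0..t} \<subseteq> {0..T}" using t by auto
    have contt: "continuous_on {0..t} (\<lambda>s. N (A s))"
      using continuous_on_compose2[OF N_cont continuous_on_subset[OF contA sub]] by auto
    have bdd: "bdd_above ((\<lambda>s. N (A s)) ` {0..t})"
      by (rule bounded_imp_bdd_above[OF compact_imp_bounded[OF compact_continuous_image[OF contt]]]) simp
    have Am: "\<forall>s\<in>{0..t}. N (A s) \<le> m" unfolding m_def Linf_def using bdd by (auto intro: cSUP_upper)
    have m0: "0 \<le> m" using Am t N_nonneg[of "A 0"] by (metis atLeastAtMost_iff order_trans order_refl)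
    have small: "t * m \<le> 1/100" using tl e1 unfolding m_def by simp
    have Qr: "\<forall>v\<in>{0..t}. N (Q v) \<le> 1/20"
      by (rule bootstrap[OF contA da a0 aQ contQ Q0 t Am m0 small])
    have QP: "N (Q t - integral {0..t} A) \<le> 3/10 * (ad_norm N * (t * m)^2)"
      by (rule QP_bound[OF contA da a0 aQ t Am m0 small Qr])
    have B22: "3/10 \<le> B2\<^sup>2 / (1 - ad_norm N * B2 * \<epsilon>)"
    proof -
      have "(11/20)^2 \<le> B2^2" using B2 by (intro power_mono) auto
      then have "121/400 \<le> B2^2" by (simp add: power_divide)
      then have "3/10 \<le> B2^2" by simp
      also have "B2^2 \<le> B2^2 / (1 - ad_norm N * B2 * \<epsilon>)"
      proof -
        have "B2^2 * (1 - ad_norm N * B2 * \<epsilon>) \<le> B2^2 * 1" by (rule mult_left_mono[OF den(2)]) simp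
        then show ?thesis using den(1) by (simp add: le_divide_eq)
      qed
      finally show ?thesis .
    qed
    have "3/10 * (ad_norm N * (t * m)^2) \<le> B2\<^sup>2 / (1 - ad_norm N * B2 * \<epsilon>) * (ad_norm N * (t * m)^2)"
      using B22 ad_facts by (intro mult_right_mono) auto
    also have "\<dots> = ad_norm N * t\<^sup>2 * B2\<^sup>2 / (1 - ad_norm N * B2 * \<epsilon>) * (Linf N A t)\<^sup>2"
      unfolding m_def by (simp add: power_mult_distrib)
    finally show "N (Q t - integral {0..t} A) \<le> ad_norm N * t\<^sup>2 * B2\<^sup>2 / (1 - ad_norm N * B2 * \<epsilon>) * (Linf N A t)\<^sup>2"
      using QP by linarith
  qed
qed


end
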